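(* Let $G$ be a connected finite simple graph on $n$ vertices, and let $m$ be the maximum multiplicity of the nonzero eigenvalues of the Laplacian matrix $L_G=D_G-A_G$. Then $\mathrm{mur}(G)\le n-m-1$.
   Context: For a finite simple undirected graph $G$ on vertices $v_1,\dots,v_n$, let $A_G$ be its $(0,1)$-adjacency matrix, $D_G=\mathrm{diag}(d_1,\dots,d_n)$ with $d_i$ the degree of $v_i$, $I$ the $n\times n$ identity matrix and $J$ the $n\times n$ all-ones matrix. A universal adjacency matrix of $G$ is any matrix $\alpha A_G+\beta I+\gamma J+\delta D_G$ with real scalars $\alpha,\beta,\gamma,\delta$ and $\alpha\neq 0$. The minimum universal rank $\mathrm{mur}(G)$ is the minimum rank over all universal adjacency matrices of $G$. *)

theory Defs
  imports "Jordan_Normal_Form.Jordan_Normal_Form" "Jordan_Normal_Form.DL_Rank"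
begin

definition simple_graph :: "nat \<Rightarrow> (nat \<Rightarrow> nat \<Rightarrow> bool) \<Rightarrow> bool" where
  "simple_graph n E \<longleftrightarrow>
     (\<forall>i j. E i j \<longrightarrow> i < n \<and> j < n) \<and> (\<forall>i j. E i j \<longrightarrow> E j i) \<and> (\<forall>i. \<not> E i i)"

definition connected_graph :: "nat \<Rightarrow> (nat \<Rightarrow> nat \<Rightarrow> bool) \<Rightarrow> bool" where
  "connected_graph n E \<longleftrightarrow> n \<ge> 1 \<and> (\<forall>i<n. \<forall>j<n. E\<^sup>*\<^sup>* i j)"

definition degree :: "nat \<Rightarrow> (nat \<Rightarrow> nat \<Rightarrow> bool) \<Rightarrow> nat \<Rightarrow> nat" where
  "degree n E i = card {j. j < n \<and> E i j}"

definition adj_mat :: "nat \<Rightarrow> (nat \<Rightarrow> nat \<Rightarrow> bool) \<Rightarrow> real mat" where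
  "adj_mat n E = mat n n (\<lambda>(i,j). if E i j then 1 else 0)"

definition deg_mat :: "nat \<Rightarrow> (nat \<Rightarrow> nat \<Rightarrow> bool) \<Rightarrow> real mat" where
  "deg_mat n E = mat n n (\<lambda>(i,j). if i = j then real (degree n E i) else 0)"

definition ones_mat :: "nat \<Rightarrow> real mat" where
  "ones_mat n = mat n n (\<lambda>_. 1)"

definition laplacian :: "nat \<Rightarrow> (nat \<Rightarrow> nat \<Rightarrow> bool) \<Rightarrow> real mat" where
  "laplacian n E = deg_mat n E - adj_mat n E"

definition universal_adj :: "nat \<Rightarrow> (nat \<Rightarrow> nat \<Rightarrow> bool) \<Rightarrow> real \<Rightarrow> real \<Rightarrow> real \<Rightarrow> real \<Rightarrow> real mat" where
  "universal_adj n E \<alpha> \<beta> \<gamma> \<delta> =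
     \<alpha> \<cdot>\<^sub>m adj_mat n E + \<beta> \<cdot>\<^sub>m 1\<^sub>m n + \<gamma> \<cdot>\<^sub>m ones_mat n + \<delta> \<cdot>\<^sub>m deg_mat n E"

definition mur :: "nat \<Rightarrow> (nat \<Rightarrow> nat \<Rightarrow> bool) \<Rightarrow> nat" where
  "mur n E = (LEAST r. \<exists>\<alpha> \<beta> \<gamma> \<delta>. \<alpha> \<noteq> 0 \<and> r = vec_space.rank n (universal_adj n E \<alpha> \<beta> \<gamma> \<delta>))"

definition eig_mult :: "real mat \<Rightarrow> real \<Rightarrow> nat" where
  "eig_mult A lam = Polynomial.order lam (char_poly A)"

definition max_nonzero_eig_mult :: "real mat \<Rightarrow> nat" where
  "max_nonzero_eig_mult A = Max {eig_mult A lam | lam. lam \<noteq> 0 \<and> eigenvalue A lam}"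

end

theory Submission
  imports Defs "Jordan_Normal_Form.Jordan_Normal_Form_Uniqueness" "Jordan_Normal_Form.Jordan_Normal_Form_Existence"
begin


lemma rank_nullity_mat:
  fixes U :: "'a::field mat"
  assumes U: "U \<in> carrier_mat n n"
  shows "vec_space.rank n U + kernel_dim U = n"
proof -
  interpret vs: vec_space "TYPE('a)" n .
  interpret K: kernel n n U by (unfold_locales, rule U)
  interpret lm: linear_map class_ring vs.V vs.V "(*\<^sub>v) U"
    apply (unfold_locales)
    using U apply (auto simp: module_hom_def Pi_def mult_add_distrib_mat_vec mult_mat_vec)
    done
  have rn: "vectorspace.dim class_ring (vs.vs lm.imT) + vectorspace.dim class_ring (vs.vs lm.kerT) = n"
    using lm.rank_nullity[OF vs.fin_dim] vs.dim_is_n by simp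
  have im: "lm.imT = vs.col_space U"
    unfolding vs.col_space_eq[OF U] lm.im_def using U by auto
  have ker: "lm.kerT = mat_kernel U"
    unfolding lm.ker_def mat_kernel_def using U by auto
  have r: "vs.rank U = vectorspace.dim class_ring (vs.vs lm.imT)"
    unfolding vs.rank_def im vs.col_space_def by simp
  have k: "kernel_dim U = vectorspace.dim class_ring (vs.vs lm.kerT)"
    unfolding ker K.kernel_dim by simp
  show ?thesis using rn r k by simp
qed


lemma mat_kernel_submodule:
  fixes A :: "'a::field mat"
  assumes A: "A \<in> carrier_mat n n"
  shows "submodule class_ring (mat_kernel A) (module_vec TYPE('a) n)"
proof -
  interpret vs: vec_space "TYPE('a)" n .
  show ?thesis unfolding submodule_def using A vs.module_axioms
    by (auto simp: mat_kernel_def mult_add_distrib_mat_vec mult_mat_vec class_ring_simps)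
qed

lemma kernel_dim_insert:
  fixes U B :: "'a::field mat"
  assumes U: "U \<in> carrier_mat n n" and B: "B \<in> carrier_mat n n"
  and sub: "mat_kernel B \<subseteq> mat_kernel U" and w: "w \<in> mat_kernel U" "w \<notin> mat_kernel B"
  shows "Suc (kernel_dim B) \<le> kernel_dim U"
proof -
  interpret vs: vec_space "TYPE('a)" n .
  interpret KU: kernel n n U by (unfold_locales, rule U)
  interpret KB: kernel n n B by (unfold_locales, rule B)
  obtain Bs where fB: "finite Bs" and bB: "KB.basis Bs" using kernel_basis_exists[OF B] by auto
  obtain Us where fU: "finite Us" and bU: "KU.basis Us" using kernel_basis_exists[OF U] by auto
  have fdU: "KU.Ker.fin_dim" unfolding KU.Ker.fin_dim_def using fU bU unfolding KU.Ker.basis_def by auto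
  have dB: "kernel_dim B = card Bs" using KB.Ker.dim_basis[OF fB bB] B by simp
  have BsK: "Bs \<subseteq> mat_kernel B" using bB unfolding KB.Ker.basis_def by auto
  have li: "KB.lin_indpt Bs" using bB unfolding KB.Ker.basis_def by auto
  have spB: "KB.span Bs = mat_kernel B" using bB unfolding KB.Ker.basis_def by auto
  note smB = mat_kernel_submodule[OF B] and smU = mat_kernel_submodule[OF U]
  have liv: "\<not> vs.lin_dep Bs" using li vs.span_li_not_depend(2)[OF BsK smB] by simp
  have BsU: "Bs \<subseteq> mat_kernel U" using BsK sub by auto
  have liU: "\<not> KU.lin_dep Bs" using liv vs.span_li_not_depend(2)[OF BsU smU] by simp
  have spU: "KU.span Bs = mat_kernel B"
    using spB vs.span_li_not_depend(1)[OF BsU smU] vs.span_li_not_depend(1)[OF BsK smB] by simp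
  have wB: "w \<notin> Bs" using w BsK by auto
  have "\<not> KU.lin_dep (Bs \<union> {w})"
    using KU.Ker.lin_dep_iff_in_span[OF BsU liU w(1) wB] w spU by auto
  from KU.Ker.li_le_dim(2)[OF fdU _ this] BsU w
  have "card (Bs \<union> {w}) \<le> KU.dim" by auto
  then show ?thesis using dB fB wB U by simp
qed


lemma real_sym_ev_real:
  fixes A :: "real mat"
  assumes A: "A \<in> carrier_mat n n" and sym: "transpose_mat A = A"
  and ev: "eigenvalue (of_real_hom.mat_hom A) (c::complex)"
  shows "c = of_real (Re c)"
proof -
  let ?A = "of_real_hom.mat_hom A :: complex mat"
  have Ac: "?A \<in> carrier_mat n n" using A by auto
  obtain v where v: "v \<in> carrier_vec n" "v \<noteq> 0\<^sub>v n" "?A *\<^sub>v v = c \<cdot>\<^sub>v v"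
    using ev A unfolding eigenvalue_def eigenvector_def by auto
  have symc: "transpose_mat ?A = ?A" using sym by (metis map_mat_transpose)
  have cj: "?A *\<^sub>v conjugate v = conjugate (?A *\<^sub>v v)"
    using A v(1) by (intro eq_vecI) (auto simp: scalar_prod_def conjugate_vec_def sum_conjugate)
  have "(transpose_mat ?A *\<^sub>v conjugate v) \<bullet> v = conjugate v \<bullet> (?A *\<^sub>v v)"
    by (rule transpose_vec_mult_scalar[OF Ac v(1)], insert v, auto)
  hence "(conjugate c \<cdot>\<^sub>v conjugate v) \<bullet> v = conjugate v \<bullet> (c \<cdot>\<^sub>v v)"
    unfolding symc cj v(3) conjugate_smult_vec .
  hence "conjugate c * (conjugate v \<bullet> v) = c * (conjugate v \<bullet> v)"
    using v(1) by simp
  moreover have "conjugate v \<bullet> v \<noteq> 0"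
    using conjugate_square_greater_0_vec[OF v(1)] v(2) conjugate_vec_sprod_comm[OF v(1) v(1)] by auto
  ultimately have "conjugate c = c" by simp
  thus ?thesis by (auto simp: conjugate_complex_def complex_eq_iff)
qed

lemma real_sym_split:
  fixes A :: "real mat"
  assumes A: "A \<in> carrier_mat n n" and sym: "transpose_mat A = A"
  shows "\<exists>as. char_poly A = (\<Prod>a\<leftarrow>as. [:- a, 1:])"
proof -
  let ?A = "of_real_hom.mat_hom A :: complex mat"
  have Ac: "?A \<in> carrier_mat n n" using A by auto
  obtain cs where cs: "char_poly ?A = (\<Prod>a\<leftarrow>cs. [:- a, 1:])"
    using char_poly_factorized[OF Ac] by auto
  have real: "c = of_real (Re c)" if "c \<in> set cs" for c
  proof -
    have "poly (char_poly ?A) c = 0" unfolding cs poly_prod_list using that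
      by (induct cs, auto)
    hence "eigenvalue ?A c" using eigenvalue_root_char_poly[OF Ac] by auto
    thus ?thesis by (rule real_sym_ev_real[OF A sym])
  qed
  interpret mph: map_poly_comm_ring_hom "complex_of_real" ..
  interpret mpi: map_poly_inj_zero_hom "complex_of_real" ..
  have mp: "map_poly complex_of_real (\<Prod>a\<leftarrow>as. [:- a, 1:]) = (\<Prod>a\<leftarrow>as. [:- of_real a, 1:])" for as
  proof (induct as)
    case (Cons a as)
    have l: "map_poly complex_of_real [:- a, 1:] = [:- of_real a, 1:]" by simp
    show ?case by (simp only: list.map prod_list.Cons mph.hom_mult Cons l)
  qed simp
  have "map_poly complex_of_real (char_poly A) = map_poly complex_of_real (\<Prod>a\<leftarrow>map Re cs. [:- a, 1:])"
  proof -
    have mm: "map (\<lambda>a. [:- complex_of_real a, 1:]) (map Re cs) = map (\<lambda>c. [:-c,1:]) cs"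
      unfolding map_map o_def by (rule map_cong[OF refl], insert real, metis)
    show ?thesis unfolding of_real_hom.char_poly_hom[OF A, symmetric] cs mp by (simp only: mm)
  qed
  hence "char_poly A = (\<Prod>a\<leftarrow>map Re cs. [:- a, 1:])"
    by (rule mpi.injectivity)
  thus ?thesis by blast
qed



lemma sym_ker_sq:
  fixes C :: "real mat"
  assumes C: "C \<in> carrier_mat n n" and sym: "transpose_mat C = C"
  and v: "v \<in> carrier_vec n" and z: "C *\<^sub>v (C *\<^sub>v v) = 0\<^sub>v n"
  shows "C *\<^sub>v v = 0\<^sub>v n"
proof -
  have Cv: "C *\<^sub>v v \<in> carrier_vec n" using C v by auto
  have "(transpose_mat C *\<^sub>v (C *\<^sub>v v)) \<bullet> v = (C *\<^sub>v v) \<bullet> (C *\<^sub>v v)"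
    by (rule transpose_vec_mult_scalar[OF C v Cv])
  hence "(C *\<^sub>v v) \<bullet> (C *\<^sub>v v) = 0" unfolding sym z using v by simp
  thus ?thesis using conjugate_square_eq_0_vec[OF Cv] by simp
qed

lemma mat_mult_zero_vec: "M \<in> carrier_mat n n \<Longrightarrow> M *\<^sub>v 0\<^sub>v n = 0\<^sub>v n"
  by (intro eq_vecI) (auto intro: scalar_prod_right_zero)

lemma sym_ker_pow:
  fixes C :: "real mat"
  assumes C: "C \<in> carrier_mat n n" and sym: "transpose_mat C = C"
  shows "mat_kernel (C ^\<^sub>m Suc k) = mat_kernel C"
proof (induct k)
  case 0
  show ?case using C by simp
next
  case (Suc k)
  have Ck: "C ^\<^sub>m Suc k \<in> carrier_mat n n" using C by auto
  show ?case
  proof (intro equalityI subsetI)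
    fix v assume "v \<in> mat_kernel (C ^\<^sub>m Suc (Suc k))"
    hence v: "v \<in> carrier_vec n" and z: "(C ^\<^sub>m Suc k * C) *\<^sub>v v = 0\<^sub>v n"
      using C by (auto simp: mat_kernel_def)
    have "C ^\<^sub>m Suc k *\<^sub>v (C *\<^sub>v v) = 0\<^sub>v n" using z assoc_mult_mat_vec[OF Ck C v] by simp
    hence "C *\<^sub>v v \<in> mat_kernel (C ^\<^sub>m Suc k)" using C v Ck by (auto simp: mat_kernel_def)
    hence "C *\<^sub>v (C *\<^sub>v v) = 0\<^sub>v n" unfolding Suc using C by (auto simp: mat_kernel_def)
    from sym_ker_sq[OF C sym v this] show "v \<in> mat_kernel C" using v C by (auto simp: mat_kernel_def)
  next
    fix v assume "v \<in> mat_kernel C"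
    hence v: "v \<in> carrier_vec n" and z: "C *\<^sub>v v = 0\<^sub>v n"
      using C by (auto simp: mat_kernel_def)
    have "(C ^\<^sub>m Suc k * C) *\<^sub>v v = 0\<^sub>v n" using z assoc_mult_mat_vec[OF Ck C v] mat_mult_zero_vec[OF Ck] by simp
    thus "v \<in> mat_kernel (C ^\<^sub>m Suc (Suc k))" using v C by (auto simp: mat_kernel_def)
  qed
qed

lemma sum_list_min_le:
  assumes "\<forall>x\<in>set xs. x \<le> (k::nat)"
  shows "sum_list (map (min k) xs) = sum_list xs"
  using assms by (induct xs) (auto simp: min_absorb2)

lemma kernel_dim_char_matrix:
  fixes A :: "real mat"
  assumes A: "A \<in> carrier_mat n n" and sym: "transpose_mat A = A"
    and split: "char_poly A = (\<Prod>a\<leftarrow>as. [:- a, 1:])"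
  shows "kernel_dim (char_matrix A t) = Polynomial.order t (char_poly A)"
proof -
  obtain n_as where jnf: "jordan_nf A n_as" using jordan_nf_exists[OF A split] by auto
  define xs where "xs = map fst [(n, e)\<leftarrow>n_as . e = t]"
  have ord: "Polynomial.order t (char_poly A) = sum_list xs"
    unfolding jordan_nf_order[OF jnf] xs_def by (induct n_as, auto)
  let ?m = "Polynomial.order t (char_poly A)"
  have "dim_gen_eigenspace A t (Suc ?m) = sum_list (map (min (Suc ?m)) xs)"
    unfolding dim_gen_eigenspace[OF jnf] xs_def ..
  also have "\<dots> = sum_list xs" unfolding ord
    by (rule sum_list_min_le, auto intro: member_le_sum_list le_SucI)
  finally have d: "dim_gen_eigenspace A t (Suc ?m) = ?m" unfolding ord .
  let ?C = "char_matrix A t"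
  have C: "?C \<in> carrier_mat n n" using A by auto
  have s: "A $$ (j,i) = A $$ (i,j)" if "i < n" "j < n" for i j
    using that A by (metis sym index_transpose_mat(1) carrier_matD)
  have symC: "transpose_mat ?C = ?C" using A unfolding char_matrix_def
    by (intro eq_matI) (auto simp: s)
  have "kernel_dim (?C ^\<^sub>m Suc ?m) = kernel_dim ?C"
    unfolding kernel_dim_def sym_ker_pow[OF C symC] using C by simp
  with d show ?thesis unfolding dim_gen_eigenspace_def by simp
qed



lemma lap_carrier: "laplacian n E \<in> carrier_mat n n"
  unfolding laplacian_def deg_mat_def adj_mat_def by auto

lemma lap_entry: "i < n \<Longrightarrow> j < n \<Longrightarrow> laplacian n E $$ (i,j) =
   (if i = j then real (degree n E i) else 0) - (if E i j then 1 else 0)"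
  unfolding laplacian_def deg_mat_def adj_mat_def by auto

lemma cnt: "(\<Sum>j<(n::nat). (if P j then 1 else 0 :: real)) = real (card {j. j < n \<and> P j})"
proof -
  have "real (card {j. j < n \<and> P j}) = (\<Sum>j\<in>{j\<in>{..<n}. P j}. 1)" by simp
  also have "\<dots> = (\<Sum>j<n. (if P j then 1 else 0 :: real))" by (rule sum.inter_filter) simp
  finally show ?thesis by simp
qed

lemma lap_rowsum: assumes "i < n" shows "(\<Sum>j<n. laplacian n E $$ (i,j)) = 0"
proof -
  have "(\<Sum>j<n. laplacian n E $$ (i,j)) = (\<Sum>j<n. (if i = j then real (degree n E i) else 0) - (if E i j then 1 else 0))"
    by (rule sum.cong) (auto simp: lap_entry assms)
  also have "\<dots> = (\<Sum>j<n. (if i = j then real (degree n E i) else 0)) - (\<Sum>j<n. (if E i j then 1 else 0))"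
    by (rule sum_subtractf)
  also have "(\<Sum>j<n. (if i = j then real (degree n E i) else 0)) = real (degree n E i)"
    using assms by (subst sum.delta') auto
  also have "(\<Sum>j<n. (if E i j then 1 else 0 :: real)) = real (degree n E i)"
    unfolding degree_def by (rule cnt)
  finally show ?thesis by simp
qed

lemma lap_sym: assumes "simple_graph n E" "i < n" "j < n"
  shows "laplacian n E $$ (i,j) = laplacian n E $$ (j,i)"
proof -
  have "E i j = E j i" using assms(1) unfolding simple_graph_def by blast
  thus ?thesis unfolding lap_entry[OF assms(2,3)] lap_entry[OF assms(3,2)] by auto
qed

lemma univ_entry: "i < n \<Longrightarrow> j < n \<Longrightarrow> universal_adj n E a b c d $$ (i,j) =
   a * (if E i j then 1 else 0) + b * (if i = j then 1 else 0) + c + d * (if i = j then real (degree n E i) else 0)"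
  unfolding universal_adj_def deg_mat_def adj_mat_def ones_mat_def by auto

lemma univ_carrier: "universal_adj n E a b c d \<in> carrier_mat n n"
  unfolding universal_adj_def deg_mat_def adj_mat_def ones_mat_def by auto

lemma mult_entry: "M \<in> carrier_mat n n \<Longrightarrow> v \<in> carrier_vec n \<Longrightarrow> i < n \<Longrightarrow>
   (M *\<^sub>v v) $ i = (\<Sum>j<n. M $$ (i,j) * v $ j)"
  by (auto simp: scalar_prod_def lessThan_atLeast0)



theorem theorem4:
  fixes n :: nat and E :: "nat \<Rightarrow> nat \<Rightarrow> bool"
  assumes "simple_graph n E" and "connected_graph n E"
    and "\<exists>lam. lam \<noteq> 0 \<and> eigenvalue (laplacian n E) lam"
  shows "int (mur n E) \<le> int n - int (max_nonzero_eig_mult (laplacian n E)) - 1"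
proof -
  let ?L = "laplacian n E"
  have Lc: "?L \<in> carrier_mat n n" by (rule lap_carrier)
  have symL: "transpose_mat ?L = ?L"
    using Lc by (intro eq_matI) (auto simp: lap_sym[OF assms(1)])
  obtain as where split: "char_poly ?L = (\<Prod>a\<leftarrow>as. [:- a, 1:])"
    using real_sym_split[OF Lc symL] by auto
  have n1: "n \<ge> 1" using assms(2) unfolding connected_graph_def by auto
  define S where "S = {eig_mult ?L lam | lam. lam \<noteq> 0 \<and> eigenvalue ?L lam}"
  have cp0: "char_poly ?L \<noteq> 0" unfolding split prod_list_zero_iff by auto
  have "S \<subseteq> eig_mult ?L ` {lam. poly (char_poly ?L) lam = 0}"
    unfolding S_def using eigenvalue_root_char_poly[OF Lc] by auto
  hence fin: "finite S" using poly_roots_finite[OF cp0] finite_surj by blast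
  have ne: "S \<noteq> {}" using assms(3) unfolding S_def by auto
  from Max_in[OF fin ne] obtain t where t: "t \<noteq> 0" "eigenvalue ?L t"
    and mx: "max_nonzero_eig_mult ?L = eig_mult ?L t"
    unfolding max_nonzero_eig_mult_def S_def[symmetric] by (auto simp: S_def)
  let ?M = "eig_mult ?L t"
  define B where "B = char_matrix ?L t"
  have Bc: "B \<in> carrier_mat n n" unfolding B_def using Lc by auto
  have kB: "kernel_dim B = ?M" unfolding B_def eig_mult_def
    by (rule kernel_dim_char_matrix[OF Lc symL split])
  define U where "U = universal_adj n E (-1) (-t) (t / real n) 1"
  have Uc: "U \<in> carrier_mat n n" unfolding U_def by (rule univ_carrier)
  have Be: "B $$ (i,j) = ?L $$ (i,j) - (if i = j then t else 0)" if "i < n" "j < n" for i j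
    using that Lc unfolding B_def char_matrix_def by auto
  have Ue: "U $$ (i,j) = B $$ (i,j) + t / real n" if "i < n" "j < n" for i j
    using that unfolding U_def univ_entry[OF that] Be[OF that] lap_entry[OF that] by auto
  have Bs: "B $$ (i,j) = B $$ (j,i)" if "i < n" "j < n" for i j
    using that unfolding Be[OF that] Be[OF that(2,1)] lap_sym[OF assms(1) that] by auto
  have Brow: "(\<Sum>j<n. B $$ (i,j)) = - t" if "i < n" for i
  proof -
    have "(\<Sum>j<n. B $$ (i,j)) = (\<Sum>j<n. ?L $$ (i,j) - (if i = j then t else 0))"
      by (rule sum.cong) (auto simp: Be that)
    also have "\<dots> = (\<Sum>j<n. ?L $$ (i,j)) - (\<Sum>j<n. (if i = j then t else 0))"
      by (rule sum_subtractf)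
    also have "(\<Sum>j<n. (if i = j then t else 0)) = t" using that by (subst sum.delta') auto
    finally show ?thesis using lap_rowsum[OF that] by simp
  qed
  have Bcol: "(\<Sum>i<n. B $$ (i,j)) = - t" if "j < n" for j
  proof -
    have "(\<Sum>i<n. B $$ (i,j)) = (\<Sum>i<n. B $$ (j,i))" by (rule sum.cong) (auto simp: Bs that)
    thus ?thesis using Brow[OF that] by simp
  qed
  define w where "w = vec n (\<lambda>_. 1 :: real)"
  have wc: "w \<in> carrier_vec n" unfolding w_def by auto
  have Uw: "U *\<^sub>v w = 0\<^sub>v n"
  proof (rule eq_vecI)
    fix i assume i: "i < dim_vec (0\<^sub>v n :: real vec)"
    hence i: "i < n" by simp
    have "(U *\<^sub>v w) $ i = (\<Sum>j<n. B $$ (i,j) + t / real n)"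
      unfolding mult_entry[OF Uc wc i] by (rule sum.cong) (auto simp: Ue i w_def)
    also have "\<dots> = (\<Sum>j<n. B $$ (i,j)) + real n * (t / real n)" by (simp add: sum.distrib)
    also have "\<dots> = 0" using Brow[OF i] n1 by simp
    finally show "(U *\<^sub>v w) $ i = 0\<^sub>v n $ i" using i by simp
  qed (use Uc in simp)
  have wU: "w \<in> mat_kernel U" using Uw wc Uc by (auto simp: mat_kernel_def)
  have wB: "w \<notin> mat_kernel B"
  proof
    assume "w \<in> mat_kernel B"
    hence z: "B *\<^sub>v w = 0\<^sub>v n" using Bc by (auto simp: mat_kernel_def)
    have "(B *\<^sub>v w) $ 0 = (\<Sum>j<n. B $$ (0,j) * w $ j)"
      using mult_entry[OF Bc wc, of 0] n1 by simp
    also have "\<dots> = (\<Sum>j<n. B $$ (0,j))" by (rule sum.cong) (auto simp: w_def)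
    also have "\<dots> = - t" using Brow n1 by simp
    finally show False using z n1 t(1) by simp
  qed
  have sub: "mat_kernel B \<subseteq> mat_kernel U"
  proof
    fix v assume "v \<in> mat_kernel B"
    hence vc: "v \<in> carrier_vec n" and z: "B *\<^sub>v v = 0\<^sub>v n" using Bc by (auto simp: mat_kernel_def)
    have zi: "(\<Sum>j<n. B $$ (i,j) * v $ j) = 0" if "i < n" for i
      using arg_cong[OF z, of "\<lambda>x. x $ i"] mult_entry[OF Bc vc that] that by simp
    have "0 = (\<Sum>i<n. (\<Sum>j<n. B $$ (i,j) * v $ j))" using zi by simp
    also have "\<dots> = (\<Sum>j<n. (\<Sum>i<n. B $$ (i,j)) * v $ j)"
      by (subst sum.swap) (simp add: sum_distrib_right)
    also have "\<dots> = (\<Sum>j<n. (- t) * v $ j)" by (rule sum.cong) (auto simp: Bcol)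
    finally have "t * (\<Sum>j<n. v $ j) = 0" by (simp add: sum_distrib_left sum_negf)
    hence sv: "(\<Sum>j<n. v $ j) = 0" using t(1) by simp
    have "U *\<^sub>v v = 0\<^sub>v n"
    proof (rule eq_vecI)
      fix i assume "i < dim_vec (0\<^sub>v n :: real vec)"
      hence i: "i < n" by simp
      have "(U *\<^sub>v v) $ i = (\<Sum>j<n. B $$ (i,j) * v $ j + t / real n * v $ j)"
        unfolding mult_entry[OF Uc vc i] by (rule sum.cong) (auto simp: Ue i algebra_simps)
      also have "\<dots> = (\<Sum>j<n. B $$ (i,j) * v $ j) + t / real n * (\<Sum>j<n. v $ j)"
        by (simp add: sum.distrib sum_distrib_left)
      also have "\<dots> = 0" using zi[OF i] sv by simp
      finally show "(U *\<^sub>v v) $ i = 0\<^sub>v n $ i" using i by simp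
    qed (use Uc in simp)
    thus "v \<in> mat_kernel U" using vc Uc by (auto simp: mat_kernel_def)
  qed
  have k1: "Suc (kernel_dim B) \<le> kernel_dim U" by (rule kernel_dim_insert[OF Uc Bc sub wU wB])
  have rn: "vec_space.rank n U + kernel_dim U = n" by (rule rank_nullity_mat[OF Uc])
  have "mur n E \<le> vec_space.rank n U" unfolding mur_def U_def
    by (rule Least_le) (rule exI[of _ "-1"], auto)
  thus ?thesis using k1 rn kB mx by linarith
qed

end
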